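(* Let $\mathbb{K}$ be either $\mathbb{R}$ or $\mathbb{C}$, with all coefficients and solutions in $\mathbb{K}$. Let $D$ be a positive integer and let $1 \le D < q \le \infty$. Let $I$ be an infinite set. For all $i\in I$ and $d \in \{1,\dots,D\}$ let $\mathbf{a}_{i,d} = (a_{i,d,j})_{j=1}^\infty \in \ell^{q/(q-d)}$, and let $b_i \in \mathbb{K}$. For all $i \in I$ consider the multiplicative polynomial equation \[ P_i(\mathbf{x}) = \sum_{k=1}^{D} \sum_{(d_1,\dots,d_k)\in \mathcal{D}_k} (\mathbf{a}_{i,d_1}, \mathbf{x}^{d_1}) (\mathbf{a}_{i,d_2}, \mathbf{x}^{d_2}) \cdots (\mathbf{a}_{i,d_k}, \mathbf{x}^{d_k}) = b_i, \] where $(\mathbf{a}_{i,d},\mathbf{x}^d) = \sum_{j=1}^\infty a_{i,d,j} x_j^d$. Equivalently, $P_i(\mathbf{x}) = \sum_{k=1}^D\sum_{\Delta\in\mathcal{D}_k}\sum_{J\in\mathbb{N}^k} a_{i,\Delta,J}\, x_J^{\Delta}$ with $a_{i,(d_1,\dots,d_k),(j_1,\dots,j_k)} = a_{i,d_1,j_1}\cdots a_{i,d_k,j_k}$ and $x_J^\Delta = x_{j_1}^{d_1}\cdots x_{j_k}^{d_k}$. Let $M>0$. If for every finite subset $S$ of $I$ the finite set of equations $\{P_i(\mathbf{x}) = b_i : i \in S\}$ has a solution $\mathbf{x}_S \in \ell^q$ with $\|\mathbf{x}_S\|_q \le M$, then the infinite set of equations $\{P_i(\mathbf{x}) = b_i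 : i\in I\}$ has a solution $\mathbf{x} \in \ell^q$ with $\|\mathbf{x}\|_q \le M$.
   Context: $\mathbb{N}=\{1,2,3,\dots\}$. For $k\in\{1,\dots,D\}$, $\mathcal{D}_k = \{(d_1,\dots,d_k)\in\mathbb{N}^k : d_1+\cdots+d_k \le D\}$. For $q=\infty$ one sets $q/(q-d)=1$ and $q/d=\infty$. $\ell^p$ ($1\le p<\infty$) denotes sequences with $\|\mathbf{a}\|_p=(\sum_j|a_j|^p)^{1/p}<\infty$ and $\ell^\infty$ bounded sequences with the sup norm; $\mathbf{x}^d = (x_j^d)_{j\ge1}$. For $\mathbf{x}\in\ell^q$ each series $(\mathbf{a}_{i,d},\mathbf{x}^d)$ converges absolutely by Hölder's inequality, since $\mathbf{x}^d\in\ell^{q/d}$ and $(q/(q-d), q/d)$ is a conjugate pair. *)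

theory Defs
  imports "HOL-Analysis.Analysis"
begin

text \<open>Sequences are indexed by nat (index 0 plays the role of j = 1).
  Exponents live in ereal so that q = \<infinity> is allowed.\<close>

definition in_lp :: "ereal \<Rightarrow> (nat \<Rightarrow> 'k::real_normed_vector) \<Rightarrow> bool" where
  "in_lp p x = (if p = \<infinity> then bdd_above (range (\<lambda>j. norm (x j)))
                else summable (\<lambda>j. norm (x j) powr real_of_ereal p))"

definition lp_norm :: "ereal \<Rightarrow> (nat \<Rightarrow> 'k::real_normed_vector) \<Rightarrow> real" where
  "lp_norm p x = (if p = \<infinity> then (SUP j. norm (x j))
                  else (\<Sum>j. norm (x j) powr real_of_ereal p) powr (1 / real_of_ereal p))"

definition dual_exp :: "ereal \<Rightarrow> nat \<Rightarrow> ereal" where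
  "dual_exp q d = (if q = \<infinity> then 1 else q / (q - ereal (real d)))"

definition pairing :: "(nat \<Rightarrow> 'k::real_normed_field) \<Rightarrow> (nat \<Rightarrow> 'k) \<Rightarrow> nat \<Rightarrow> 'k" where
  "pairing a x d = (\<Sum>j. a j * x j ^ d)"

definition Dtuples :: "nat \<Rightarrow> nat \<Rightarrow> nat list set" where
  "Dtuples D k = {ds. length ds = k \<and> (\<forall>d\<in>set ds. 1 \<le> d) \<and> sum_list ds \<le> D}"

definition mult_poly :: "nat \<Rightarrow> (nat \<Rightarrow> nat \<Rightarrow> 'k::real_normed_field) \<Rightarrow> (nat \<Rightarrow> 'k) \<Rightarrow> 'k" where
  "mult_poly D a x = (\<Sum>k\<in>{1..D}. \<Sum>ds\<in>Dtuples D k. prod_list (map (\<lambda>d. pairing (a d) x d) ds))"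

end

theory Submission
  imports Defs "HOL-Computational_Algebra.Polynomial"
begin

lemma map_poly_of_real_mult:
  "map_poly (of_real :: real \<Rightarrow> 'a::{real_algebra_1,comm_ring_1}) (p * q) =
   map_poly of_real p * map_poly of_real q"
  by (intro poly_eqI) (simp add: coeff_map_poly coeff_mult of_real_sum)

lemma map_poly_of_real_add:
  "map_poly (of_real :: real \<Rightarrow> 'a::{real_algebra_1,comm_ring_1}) (p + q) =
   map_poly of_real p + map_poly of_real q"
  by (intro poly_eqI) (simp add: coeff_map_poly)

lemma map_poly_of_real_prod:
  "map_poly (of_real :: real \<Rightarrow> 'a::{real_algebra_1,comm_ring_1}) (\<Prod>k\<in>A. f k) =
   (\<Prod>k\<in>A. map_poly of_real (f k))"
  by (induction A rule: infinite_finite_induct) (auto simp: map_poly_of_real_mult)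

lemma cis_quad_root:
  fixes e th :: real and s :: real
  assumes "s = 1 \<or> s = -1"
  shows "(- (complex_of_real e * cis (s * th)))\<^sup>2 + complex_of_real (2 * e * cos th) * (- (complex_of_real e * cis (s * th)))
          + complex_of_real (e\<^sup>2) = 0"
proof -
  define w where "w = cis (s * th)"
  have w1: "w * cnj w = 1" unfolding w_def by (simp add: cis_cnj cis_mult)
  have w2: "w + cnj w = complex_of_real (2 * cos th)"
    using assms unfolding w_def by (auto simp: complex_eq_iff)
  have h: "complex_of_real (2 * e * cos th) = complex_of_real e * (w + cnj w)"
    using w2 by simp
  have h2: "complex_of_real (e\<^sup>2) = complex_of_real e * complex_of_real e"
    by (simp add: power2_eq_square)
  have "(- (complex_of_real e * w))\<^sup>2 + complex_of_real (2 * e * cos th) * (- (complex_of_real e * w))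
          + complex_of_real (e\<^sup>2) = (complex_of_real e * complex_of_real e) * (1 - w * cnj w)"
    unfolding h h2 by (simp add: power2_eq_square algebra_simps)
  then show ?thesis using w1 unfolding w_def by simp
qed

lemma poly_identity:
  fixes e :: real and j :: nat
  assumes e: "e > 0"
  defines "n \<equiv> 2 * j + 1"
  shows "[:e, 1:] * (\<Prod>k\<in>{1..j}. [:e\<^sup>2, 2 * e * cos (2 * pi * real k / real n), 1:])
         = [:e ^ n:] + monom 1 n" (is "?P = ?Q")
proof -
  let ?f = "\<lambda>k. [:e\<^sup>2, 2 * e * cos (2 * pi * real k / real n), 1:]"
  have n0: "n > 0" unfolding n_def by simp
  have degP: "degree ?P = n"
  proof -
    have "degree ?P = degree [:e, 1:] + degree (\<Prod>k\<in>{1..j}. ?f k)"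
      by (rule degree_mult_eq) (auto simp: prod_zero_iff)
    also have "degree (\<Prod>k\<in>{1..j}. ?f k) = (\<Sum>k\<in>{1..j}. degree (?f k))"
      by (rule degree_prod_sum_eq) auto
    finally show ?thesis unfolding n_def by simp
  qed
  have lcP: "lead_coeff ?P = 1"
    unfolding lead_coeff_mult lead_coeff_prod by simp
  let ?mP = "map_poly (of_real :: real \<Rightarrow> complex) ?P"
  let ?mQ = "map_poly (of_real :: real \<Rightarrow> complex) ?Q"
  have degQ: "degree ?Q \<le> n"
    by (simp add: degree_add_le degree_monom_le)
  have "?mP = ?mQ"
  proof (rule poly_eqI_degree_lead_coeff[of _ n _ "{z. z ^ n = - ((complex_of_real e) ^ n)}"])
    have c1: "poly.coeff ?P n = 1" using lcP unfolding degP .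
    have c2: "poly.coeff ?Q n = 1" using n0 by (cases n) (auto simp: coeff_monom)
    show "poly.coeff ?mP n = poly.coeff ?mQ n"
      by (simp only: coeff_map_poly of_real_0 c1 c2)
    show "n \<le> card {z. z ^ n = - ((complex_of_real e) ^ n)}"
      using card_nth_roots[of "- ((complex_of_real e) ^ n)" n] n0 e by simp
    show "degree ?mP \<le> n" using degP by (simp add: degree_map_poly)
    show "degree ?mQ \<le> n" using degQ by (simp add: degree_map_poly)
  next
    fix z :: complex assume z: "z \<in> {z. z ^ n = - ((complex_of_real e) ^ n)}"
    have oddn: "odd n" unfolding n_def by simp
    define w where "w = - z / complex_of_real e"
    have "w ^ n = (- z) ^ n / (complex_of_real e) ^ n"
      unfolding w_def by (rule power_divide)
    also have "(- z) ^ n = - (z ^ n)" using oddn by (rule power_minus_odd)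
    also have "- (z ^ n) = (complex_of_real e) ^ n" using z by simp
    also have "(complex_of_real e) ^ n / (complex_of_real e) ^ n = 1" using e by simp
    finally have "w \<in> {z. z ^ n = 1}" by simp
    then obtain k where k: "k < n" "w = cis (2 * pi * real k / real n)"
      using bij_betw_imp_surj_on[OF Complex.bij_betw_roots_unity[OF n0]] by blast
    have zw: "z = - (complex_of_real e * w)" unfolding w_def using e by simp
    have "poly ?mQ z = z ^ n + (complex_of_real e) ^ n"
      by (simp add: map_poly_of_real_add map_poly_monom poly_monom map_poly_pCons add.commute)
    also have "\<dots> = 0" using z by simp
    finally have Q0: "poly ?mQ z = 0" .
    have mP: "poly ?mP z = (z + complex_of_real e) *
        (\<Prod>k\<in>{1..j}. z\<^sup>2 + complex_of_real (2 * e * cos (2 * pi * real k / real n)) * z + complex_of_real (e\<^sup>2))"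
    proof -
      have A: "poly ?mP z = poly (map_poly complex_of_real [:e,1:]) z * (\<Prod>k\<in>{1..j}. poly (map_poly complex_of_real (?f k)) z)"
        by (simp only: map_poly_of_real_mult map_poly_of_real_prod poly_mult poly_prod)
      have B: "poly (map_poly complex_of_real [:e,1:]) z = z + complex_of_real e" by (simp add: map_poly_pCons)
      have C: "poly (map_poly complex_of_real (?f k)) z = z\<^sup>2 + complex_of_real (2 * e * cos (2 * pi * real k / real n)) * z + complex_of_real (e\<^sup>2)" for k
        by (simp add: map_poly_pCons power2_eq_square algebra_simps)
      show ?thesis by (simp only: A B C)
    qed
    have P0: "poly ?mP z = 0"
    proof (cases "k = 0")
      case True
      then have "z = - complex_of_real e" using zw k by simp
      then show ?thesis using mP by simp
    next
      case False
      show ?thesis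
      proof (cases "k \<le> j")
        case True
        have zc: "z = - (complex_of_real e * cis (1 * (2 * pi * real k / real n)))"
          using zw k(2) by simp
        have "z\<^sup>2 + complex_of_real (2 * e * cos (2 * pi * real k / real n)) * z + complex_of_real (e\<^sup>2) = 0"
          unfolding zc by (rule cis_quad_root) simp
        then have "(\<Prod>k\<in>{1..j}. z\<^sup>2 + complex_of_real (2 * e * cos (2 * pi * real k / real n)) * z + complex_of_real (e\<^sup>2)) = 0"
          using True False by (intro prod_zero) auto
        then show ?thesis using mP by simp
      next
        case False
        define k' where "k' = n - k"
        have k'r: "k' \<in> {1..j}" using False k unfolding k'_def n_def by auto
        have nk: "real n - real k = real k'" using k unfolding k'_def by (simp add: of_nat_diff)
        have eq: "2 * pi * real k / real n = -1 * (2 * pi * real k' / real n) + 2 * pi"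
        proof -
          have "2 * pi * real k / real n = 2 * pi * (real n - real k') / real n"
            using nk by simp
          also have "\<dots> = 2 * pi * real n / real n - 2 * pi * real k' / real n"
            by (simp add: right_diff_distrib diff_divide_distrib)
          also have "2 * pi * real n / real n = 2 * pi" using n0 by simp
          finally show ?thesis by simp
        qed
        have "cis (2 * pi * real k / real n) = cis (-1 * (2 * pi * real k' / real n)) * cis (2 * pi)"
          unfolding eq by (rule cis_mult[symmetric])
        also have "cis (2 * pi) = 1" by (simp add: complex_eq_iff)
        finally have "cis (2 * pi * real k / real n) = cis (-1 * (2 * pi * real k' / real n))" by simp
        then have zc: "z = - (complex_of_real e * cis (-1 * (2 * pi * real k' / real n)))"
          using zw k(2) by simp
        have "z\<^sup>2 + complex_of_real (2 * e * cos (2 * pi * real k' / real n)) * z + complex_of_real (e\<^sup>2) = 0"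
          unfolding zc by (rule cis_quad_root) simp
        then have "(\<Prod>k\<in>{1..j}. z\<^sup>2 + complex_of_real (2 * e * cos (2 * pi * real k / real n)) * z + complex_of_real (e\<^sup>2)) = 0"
          using k'r by (intro prod_zero) auto
        then show ?thesis using mP by simp
      qed
    qed
    show "poly ?mP z = poly ?mQ z" using P0 Q0 by simp
  qed
  show ?thesis
  proof (rule poly_eqI)
    fix i
    have "poly.coeff ?mP i = poly.coeff ?mQ i" using \<open>?mP = ?mQ\<close> by simp
    then show "poly.coeff ?P i = poly.coeff ?Q i" by (simp only: coeff_map_poly of_real_0 of_real_eq_iff)
  qed
qed


lemma real_poly_eval:
  fixes Y :: "'a::{real_algebra_1,comm_ring_1}" and e :: real and j :: nat
  assumes e: "e > 0"
  shows "Y ^ (2*j+1) + of_real (e ^ (2*j+1)) = (Y + of_real e) *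
     (\<Prod>k\<in>{1..j}. Y\<^sup>2 + of_real (2 * e * cos (2 * pi * real k / real (2*j+1))) * Y + of_real (e\<^sup>2))"
proof -
  define n where "n = 2*j+1"
  let ?f = "\<lambda>k. [:e\<^sup>2, 2 * e * cos (2 * pi * real k / real n), 1:]"
  have id: "[:e, 1:] * (\<Prod>k\<in>{1..j}. ?f k) = [:e ^ n:] + monom 1 n"
    using poly_identity[OF e, of j] unfolding n_def .
  have "poly (map_poly (of_real :: real \<Rightarrow> 'a) ([:e, 1:] * (\<Prod>k\<in>{1..j}. ?f k))) Y
      = poly (map_poly of_real ([:e ^ n:] + monom 1 n)) Y" by (simp only: id)
  moreover have "poly (map_poly (of_real :: real \<Rightarrow> 'a) ([:e ^ n:] + monom 1 n)) Y = Y ^ n + of_real (e ^ n)"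
    by (simp add: map_poly_of_real_add map_poly_monom poly_monom map_poly_pCons add.commute)
  moreover have "poly (map_poly (of_real :: real \<Rightarrow> 'a) ([:e, 1:] * (\<Prod>k\<in>{1..j}. ?f k))) Y =
     (Y + of_real e) * (\<Prod>k\<in>{1..j}. Y\<^sup>2 + of_real (2 * e * cos (2 * pi * real k / real n)) * Y + of_real (e\<^sup>2))"
  proof -
    have A: "poly (map_poly (of_real :: real \<Rightarrow> 'a) ([:e, 1:] * (\<Prod>k\<in>{1..j}. ?f k))) Y = poly (map_poly of_real [:e,1:]) Y * (\<Prod>k\<in>{1..j}. poly (map_poly of_real (?f k)) Y)"
      by (simp only: map_poly_of_real_mult map_poly_of_real_prod poly_mult poly_prod)
    have B: "poly (map_poly (of_real :: real \<Rightarrow> 'a) [:e,1:]) Y = Y + of_real e" by (simp add: map_poly_pCons)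
    have C: "poly (map_poly (of_real :: real \<Rightarrow> 'a) (?f k)) Y = Y\<^sup>2 + of_real (2 * e * cos (2 * pi * real k / real n)) * Y + of_real (e\<^sup>2)" for k
      by (simp add: map_poly_pCons power2_eq_square algebra_simps)
    show ?thesis by (simp only: A B C)
  qed
  ultimately show ?thesis unfolding n_def by simp
qed

lemma quad_ring_identity:
  fixes W V E C P R :: "'a::comm_ring_1"
  assumes "R\<^sup>2 - P\<^sup>2 = V + E * C" "(P\<^sup>2 + R\<^sup>2)\<^sup>2 = (V + E * C)\<^sup>2 + E\<^sup>2 * (1 - C\<^sup>2)"
  shows "(W\<^sup>2 + V)\<^sup>2 + 2 * E * C * (W\<^sup>2 + V) + E\<^sup>2 = ((W - P)\<^sup>2 + R\<^sup>2) * ((W + P)\<^sup>2 + R\<^sup>2)"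
proof -
  have "((W - P)\<^sup>2 + R\<^sup>2) * ((W + P)\<^sup>2 + R\<^sup>2) = W^4 + 2 * (R\<^sup>2 - P\<^sup>2) * W\<^sup>2 + (P\<^sup>2 + R\<^sup>2)\<^sup>2"
    by (simp add: power2_eq_square power4_eq_xxxx algebra_simps)
  also have "\<dots> = W^4 + 2 * (V + E * C) * W\<^sup>2 + ((V + E * C)\<^sup>2 + E\<^sup>2 * (1 - C\<^sup>2))"
    using assms by simp
  also have "\<dots> = (W\<^sup>2 + V)\<^sup>2 + 2 * E * C * (W\<^sup>2 + V) + E\<^sup>2"
    by (simp add: power2_eq_square power4_eq_xxxx algebra_simps)
  finally show ?thesis by simp
qed

lemma quad_factor:
  fixes W :: "'a::real_field"
  assumes c: "\<bar>c\<bar> \<le> 1"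
  shows "\<exists>p r::real. (W\<^sup>2 + of_real v)\<^sup>2 + of_real (2 * e * c) * (W\<^sup>2 + of_real v) + of_real (e\<^sup>2)
      = ((W - of_real p)\<^sup>2 + of_real (r\<^sup>2)) * ((W + of_real p)\<^sup>2 + of_real (r\<^sup>2))"
proof -
  define A where "A = v + e * c"
  define Bs where "Bs = e\<^sup>2 * (1 - c\<^sup>2)"
  have "c\<^sup>2 \<le> 1" using c by (simp add: abs_square_le_1)
  then have Bs0: "Bs \<ge> 0" unfolding Bs_def by simp
  define R where "R = sqrt (A\<^sup>2 + Bs)"
  have RA: "\<bar>A\<bar> \<le> R" unfolding R_def
    using Bs0 real_sqrt_le_mono[of "A\<^sup>2" "A\<^sup>2 + Bs"] by (simp add: real_sqrt_abs)
  have R0: "R \<ge> 0" unfolding R_def using Bs0 by simp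
  have RR: "R\<^sup>2 = A\<^sup>2 + Bs" unfolding R_def using Bs0 by (simp add: add_nonneg_nonneg)
  define r where "r = sqrt ((R + A) / 2)"
  define p where "p = sqrt ((R - A) / 2)"
  have r2: "r\<^sup>2 = (R + A) / 2" unfolding r_def using RA by simp
  have p2: "p\<^sup>2 = (R - A) / 2" unfolding p_def using RA by simp
  have h1: "r\<^sup>2 - p\<^sup>2 = A" using r2 p2 by simp
  have "p\<^sup>2 + r\<^sup>2 = R" using r2 p2 by simp
  then have h2: "(p\<^sup>2 + r\<^sup>2)\<^sup>2 = A\<^sup>2 + Bs" using RR by simp
  have H1: "(of_real r :: 'a)\<^sup>2 - (of_real p)\<^sup>2 = of_real v + of_real e * of_real c"
    using arg_cong[OF h1, of "of_real :: real \<Rightarrow> 'a"] unfolding A_def by (simp add: of_real_power)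
  have H2: "((of_real p :: 'a)\<^sup>2 + (of_real r)\<^sup>2)\<^sup>2 = (of_real v + of_real e * of_real c)\<^sup>2 + (of_real e)\<^sup>2 * (1 - (of_real c)\<^sup>2)"
    using arg_cong[OF h2, of "of_real :: real \<Rightarrow> 'a"] unfolding A_def Bs_def by (simp add: of_real_power)
  have "(W\<^sup>2 + of_real v)\<^sup>2 + 2 * of_real e * of_real c * (W\<^sup>2 + of_real v) + (of_real e)\<^sup>2
      = ((W - of_real p)\<^sup>2 + (of_real r)\<^sup>2) * ((W + of_real p)\<^sup>2 + (of_real r)\<^sup>2)"
    by (rule quad_ring_identity[OF H1 H2])
  then show ?thesis by (intro exI[of _ p] exI[of _ r]) (simp add: of_real_power mult.assoc)
qed


lemma norm_quad_lower:
  fixes \<xi> :: "'k::real_normed_field"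
  assumes v: "v \<ge> 0"
  shows "norm ((\<xi> - of_real a)\<^sup>2 + of_real v) \<ge> a\<^sup>2 + v - 2 * \<bar>a\<bar> * norm \<xi> - (norm \<xi>)\<^sup>2"
proof -
  have eq: "(\<xi> - of_real a)\<^sup>2 + of_real v = of_real (a\<^sup>2 + v) + (\<xi>\<^sup>2 - of_real (2 * a) * \<xi>)"
    by (simp add: power2_eq_square algebra_simps)
  have n1: "norm (of_real (a\<^sup>2 + v) :: 'k) = a\<^sup>2 + v"
    unfolding norm_of_real using v by simp
  have "norm (\<xi>\<^sup>2 - of_real (2 * a) * \<xi>) \<le> norm (\<xi>\<^sup>2) + norm (of_real (2 * a) * \<xi>)"
    by (rule norm_triangle_ineq4)
  also have "\<dots> = (norm \<xi>)\<^sup>2 + 2 * \<bar>a\<bar> * norm \<xi>" by (simp add: norm_mult norm_power)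
  finally have n2: "norm (\<xi>\<^sup>2 - of_real (2 * a) * \<xi>) \<le> (norm \<xi>)\<^sup>2 + 2 * \<bar>a\<bar> * norm \<xi>" .
  have "norm (of_real (a\<^sup>2 + v) :: 'k) - norm (\<xi>\<^sup>2 - of_real (2 * a) * \<xi>) \<le> norm (of_real (a\<^sup>2 + v) + (\<xi>\<^sup>2 - of_real (2 * a) * \<xi>))"
    by (rule norm_diff_ineq)
  then show ?thesis unfolding eq using n1 n2 by linarith
qed

lemma mazur_quadratic:
  fixes \<xi> :: "'k::real_normed_field"
  shows "\<exists>a v. v \<ge> 0 \<and> (\<xi> - of_real a)\<^sup>2 + of_real v = 0"
proof -
  define f where "f = (\<lambda>p::real \<times> real. norm ((\<xi> - of_real (fst p))\<^sup>2 + of_real (snd p)))"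
  define s where "s = norm \<xi>"
  have s0: "s \<ge> 0" unfolding s_def by simp
  define R where "R = 4 * s + 3 * s\<^sup>2 + 1"
  define K where "K = {-R..R} \<times> {0..R}"
  have R0: "R \<ge> 0" unfolding R_def using s0 by simp
  have f00: "f (0, 0) = s\<^sup>2" unfolding f_def s_def by (simp add: norm_power)
  have out: "f (a, v) > s\<^sup>2" if v: "v \<ge> 0" and nK: "(a, v) \<notin> K" for a v
  proof -
    have lb: "f (a, v) \<ge> a\<^sup>2 + v - 2 * \<bar>a\<bar> * s - s\<^sup>2"
      unfolding f_def s_def using norm_quad_lower[OF v, where \<xi>=\<xi> and a=a] by simp
    have q1: "a\<^sup>2 - 2 * \<bar>a\<bar> * s \<ge> - s\<^sup>2"
    proof -
      have "0 \<le> (\<bar>a\<bar> - s)\<^sup>2" by simp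
      then show ?thesis by (simp add: power2_eq_square algebra_simps)
    qed
    from nK v have "\<bar>a\<bar> > R \<or> v > R" unfolding K_def by auto
    then show ?thesis
    proof
      assume a: "\<bar>a\<bar> > R"
      have a1: "\<bar>a\<bar> \<ge> 4 * s + 1"
        using a s0 mult_nonneg_nonneg[OF s0 s0] unfolding R_def power2_eq_square by linarith
      have a2: "\<bar>a\<bar> - 2 * s \<ge> 2 * s + 1" using a1 by linarith
      have "(4 * s + 1) * (2 * s + 1) \<le> \<bar>a\<bar> * (\<bar>a\<bar> - 2 * s)"
        by (rule mult_mono[OF a1 a2]) (use s0 in auto)
      then have "a\<^sup>2 - 2 * \<bar>a\<bar> * s \<ge> 8 * s\<^sup>2 + 6 * s + 1"
        by (simp add: power2_eq_square algebra_simps)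
      then show ?thesis using lb v s0 zero_le_power2[of s] by linarith
    next
      assume "v > R"
      then show ?thesis using lb q1 s0 unfolding R_def by linarith
    qed
  qed
  have contf: "continuous_on UNIV f" unfolding f_def by (intro continuous_intros)
  have cK: "compact K" unfolding K_def by (intro compact_Times compact_Icc)
  have K00: "(0, 0) \<in> K" unfolding K_def using R0 by auto
  obtain p0 where p0: "p0 \<in> K" "\<And>p. p \<in> K \<Longrightarrow> f p0 \<le> f p"
    using continuous_attains_inf[OF cK _ continuous_on_subset[OF contf]] K00 by blast
  define m where "m = f p0"
  have glob: "m \<le> f (a, v)" if "v \<ge> 0" for a v
  proof (cases "(a, v) \<in> K")
    case True then show ?thesis using p0 unfolding m_def by blast
  next
    case False
    have "m \<le> f (0, 0)" using p0 K00 unfolding m_def by blast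
    then show ?thesis using out[OF that False] f00 by linarith
  qed
  show ?thesis
  proof (cases "m = 0")
    case True
    then show ?thesis using p0(1) unfolding m_def f_def K_def
      by (intro exI[of _ "fst p0"] exI[of _ "snd p0"]) auto
  next
    case False
    have m0: "m > 0" using False unfolding m_def f_def by simp
    define Ms where "Ms = K \<inter> {p. f p = m}"
    have cMs: "compact Ms" unfolding Ms_def
      by (intro compact_Int_closed cK closed_Collect_eq continuous_intros contf continuous_on_const)
    have "p0 \<in> Ms" unfolding Ms_def m_def using p0 by simp
    then obtain p1 where p1: "p1 \<in> Ms" "\<And>p. p \<in> Ms \<Longrightarrow> snd p \<le> snd p1"
      using continuous_attains_sup[OF cMs _ continuous_on_snd[OF continuous_on_id]] by blast
    define a0 where "a0 = fst p1"
    define v0 where "v0 = snd p1"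
    have v0: "v0 \<ge> 0" using p1(1) unfolding Ms_def K_def v0_def by auto
    define Y where "Y = (\<xi> - of_real a0)\<^sup>2 + of_real v0"
    have nY: "norm Y = m" using p1(1) unfolding Ms_def Y_def f_def a0_def v0_def by simp
    define e where "e = m / 2"
    have e0: "e > 0" unfolding e_def using m0 by simp
    have bound: "norm (Y + of_real e) \<le> m + m * (1/2) ^ (2*j+1)" for j
    proof -
      define n where "n = 2*j+1"
      have fac: "norm (Y\<^sup>2 + of_real (2 * e * cos (2 * pi * real k / real n)) * Y + of_real (e\<^sup>2)) \<ge> m\<^sup>2" for k
      proof -
        obtain p r where pr: "((\<xi> - of_real a0)\<^sup>2 + of_real v0)\<^sup>2 + of_real (2 * e * cos (2 * pi * real k / real n)) * ((\<xi> - of_real a0)\<^sup>2 + of_real v0) + of_real (e\<^sup>2)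
            = (((\<xi> - of_real a0) - of_real p)\<^sup>2 + of_real (r\<^sup>2)) * (((\<xi> - of_real a0) + of_real p)\<^sup>2 + of_real (r\<^sup>2))"
          using quad_factor[of "cos (2 * pi * real k / real n)" "\<xi> - of_real a0" v0 e] by auto
        have "m \<le> f (a0 + p, r\<^sup>2)" by (rule glob) simp
        also have "f (a0 + p, r\<^sup>2) = norm (((\<xi> - of_real a0) - of_real p)\<^sup>2 + of_real (r\<^sup>2))"
          unfolding f_def by (simp add: algebra_simps)
        finally have 1: "m \<le> norm (((\<xi> - of_real a0) - of_real p)\<^sup>2 + of_real (r\<^sup>2))" .
        have "m \<le> f (a0 - p, r\<^sup>2)" by (rule glob) simp
        also have "f (a0 - p, r\<^sup>2) = norm (((\<xi> - of_real a0) + of_real p)\<^sup>2 + of_real (r\<^sup>2))"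
          unfolding f_def by (simp add: algebra_simps)
        finally have 2: "m \<le> norm (((\<xi> - of_real a0) + of_real p)\<^sup>2 + of_real (r\<^sup>2))" .
        have "m\<^sup>2 \<le> norm (((\<xi> - of_real a0) - of_real p)\<^sup>2 + of_real (r\<^sup>2)) * norm (((\<xi> - of_real a0) + of_real p)\<^sup>2 + of_real (r\<^sup>2))"
        proof -
          have "m * m \<le> norm (((\<xi> - of_real a0) - of_real p)\<^sup>2 + of_real (r\<^sup>2)) * norm (((\<xi> - of_real a0) + of_real p)\<^sup>2 + of_real (r\<^sup>2))"
            by (rule mult_mono[OF 1 2]) (use m0 in auto)
          then show ?thesis by (simp only: power2_eq_square[of m])
        qed
        then show ?thesis unfolding Y_def pr norm_mult .
      qed
      have prodlb: "m ^ (2 * j) \<le> (\<Prod>k\<in>{1..j}. norm (Y\<^sup>2 + of_real (2 * e * cos (2 * pi * real k / real n)) * Y + of_real (e\<^sup>2)))"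
      proof -
        have "m ^ (2 * j) = (\<Prod>k\<in>{1..j}. m\<^sup>2)" by (simp add: power_mult)
        also have "\<dots> \<le> (\<Prod>k\<in>{1..j}. norm (Y\<^sup>2 + of_real (2 * e * cos (2 * pi * real k / real n)) * Y + of_real (e\<^sup>2)))"
          using fac by (intro prod_mono) auto
        finally show ?thesis .
      qed
      have ident: "Y ^ n + of_real (e ^ n) = (Y + of_real e) *
         (\<Prod>k\<in>{1..j}. Y\<^sup>2 + of_real (2 * e * cos (2 * pi * real k / real n)) * Y + of_real (e\<^sup>2))"
        unfolding n_def by (rule real_poly_eval[OF e0])
      have "norm (Y + of_real e) * m ^ (2 * j) \<le> norm (Y + of_real e) *
          (\<Prod>k\<in>{1..j}. norm (Y\<^sup>2 + of_real (2 * e * cos (2 * pi * real k / real n)) * Y + of_real (e\<^sup>2)))"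
        using prodlb by (intro mult_left_mono) auto
      also have "\<dots> = norm (Y ^ n + of_real (e ^ n))" unfolding ident norm_mult prod_norm ..
      also have "\<dots> \<le> norm (Y ^ n) + norm (of_real (e ^ n) :: 'k)" by (rule norm_triangle_ineq)
      also have "\<dots> = m ^ n + e ^ n" using e0 nY by (simp add: norm_power)
      finally have *: "norm (Y + of_real e) * m ^ (2 * j) \<le> m ^ n + e ^ n" .
      have mp: "m ^ (2 * j) > 0" using m0 by simp
      have "m ^ n + e ^ n = (m + m * (1/2) ^ n) * m ^ (2 * j)"
        unfolding e_def n_def by (simp add: power_divide field_simps)
      then have "norm (Y + of_real e) * m ^ (2 * j) \<le> (m + m * (1/2) ^ n) * m ^ (2 * j)" using * by simp
      then show ?thesis unfolding n_def using mp by simp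
    qed
    have le: "norm (Y + of_real e) \<le> m"
    proof (rule ccontr)
      assume "\<not> ?thesis"
      then have d: "(norm (Y + of_real e) - m) / m > 0" using m0 by simp
      obtain j where j: "(1/2::real) ^ j < (norm (Y + of_real e) - m) / m"
        using real_arch_pow_inv[OF d, of "1/2"] by auto
      have tle: "(1/2::real) ^ (2*j+1) \<le> (1/2) ^ j" by (rule power_decreasing) auto
      have "(1/2::real) ^ j * m < norm (Y + of_real e) - m"
        using j m0 by (simp add: pos_less_divide_eq)
      moreover have "m * (1/2::real) ^ (2*j+1) \<le> m * (1/2) ^ j"
        using mult_left_mono[OF tle, of m] m0 by simp
      ultimately have "m * (1/2::real) ^ (2*j+1) < norm (Y + of_real e) - m" by (simp add: mult.commute)
      then show False using bound[of j] by linarith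
    qed
    have fe: "f (a0, v0 + e) = norm (Y + of_real e)" unfolding f_def Y_def by (simp add: add.assoc)
    have "m \<le> f (a0, v0 + e)" using glob v0 e0 by simp
    then have feq: "f (a0, v0 + e) = m" using le fe by simp
    show ?thesis
    proof (cases "(a0, v0 + e) \<in> K")
      case True
      then have "(a0, v0 + e) \<in> Ms" unfolding Ms_def using feq by simp
      then have "v0 + e \<le> v0" using p1(2) unfolding v0_def by fastforce
      then show ?thesis using e0 by simp
    next
      case False
      have "f (a0, v0 + e) > s\<^sup>2" using out[OF _ False] v0 e0 by simp
      moreover have "m \<le> s\<^sup>2" using p0 K00 f00 unfolding m_def by metis
      ultimately show ?thesis using feq by simp
    qed
  qed
qed


lemma elem_form:
  fixes \<xi> :: "'k::real_normed_field"
  shows "(\<exists>a. \<xi> = of_real a) \<or> (\<exists>a b \<iota>. \<iota>\<^sup>2 = (-1::'k) \<and> \<xi> = of_real a + of_real b * \<iota>)"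
proof -
  obtain a v where av: "v \<ge> 0" "(\<xi> - of_real a)\<^sup>2 + of_real v = 0"
    using mazur_quadratic[of \<xi>] by blast
  show ?thesis
  proof (cases "v = 0")
    case True
    then have "\<xi> = of_real a" using av by simp
    then show ?thesis by blast
  next
    case False
    then have v0: "v > 0" using av by simp
    define \<iota> where "\<iota> = (\<xi> - of_real a) / of_real (sqrt v)"
    have sv: "(of_real (sqrt v) :: 'k) \<noteq> 0" using v0 by simp
    have sv2: "(of_real (sqrt v) :: 'k)\<^sup>2 = of_real v" using v0 by (simp flip: of_real_power)
    have "\<iota>\<^sup>2 = (\<xi> - of_real a)\<^sup>2 / of_real v" unfolding \<iota>_def by (simp add: power_divide sv2)
    also have "(\<xi> - of_real a)\<^sup>2 = - of_real v" using av(2) by (simp add: eq_neg_iff_add_eq_0)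
    also have "- of_real v / (of_real v :: 'k) = -1" using v0 by simp
    finally have i2: "\<iota>\<^sup>2 = -1" .
    have "\<xi> = of_real a + of_real (sqrt v) * \<iota>" unfolding \<iota>_def using sv by simp
    then show ?thesis using i2 by blast
  qed
qed

lemma field_structure:
  shows "(\<forall>\<xi>::'k::real_normed_field. \<exists>a. \<xi> = of_real a) \<or>
         (\<exists>\<iota>::'k. \<iota>\<^sup>2 = -1 \<and> (\<forall>\<xi>. \<exists>a b. \<xi> = of_real a + of_real b * \<iota>))"
proof (cases "\<forall>\<xi>::'k. \<exists>a. \<xi> = of_real a")
  case True then show ?thesis by blast
next
  case False
  then obtain \<xi>0 :: 'k where "\<not> (\<exists>a. \<xi>0 = of_real a)" by blast
  then obtain a0 b0 \<iota>0 where i0: "\<iota>0\<^sup>2 = (-1::'k)" using elem_form[of \<xi>0] by blast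
  have "\<forall>\<xi>::'k. \<exists>a b. \<xi> = of_real a + of_real b * \<iota>0"
  proof
    fix \<xi> :: 'k
    from elem_form[of \<xi>] show "\<exists>a b. \<xi> = of_real a + of_real b * \<iota>0"
    proof
      assume "\<exists>a. \<xi> = of_real a"
      then obtain a where "\<xi> = of_real a" by blast
      then show ?thesis by (intro exI[of _ a] exI[of _ 0]) simp
    next
      assume "\<exists>a b \<iota>. \<iota>\<^sup>2 = (-1::'k) \<and> \<xi> = of_real a + of_real b * \<iota>"
      then obtain a b \<iota> where i: "\<iota>\<^sup>2 = (-1::'k)" "\<xi> = of_real a + of_real b * \<iota>" by blast
      have "(\<iota> - \<iota>0) * (\<iota> + \<iota>0) = \<iota>\<^sup>2 - \<iota>0\<^sup>2" by (simp add: power2_eq_square algebra_simps)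
      also have "\<dots> = 0" using i(1) i0 by simp
      finally have "\<iota> = \<iota>0 \<or> \<iota> = - \<iota>0" by (auto simp: eq_neg_iff_add_eq_0 add.commute)
      then show ?thesis
      proof
        assume "\<iota> = \<iota>0" then show ?thesis using i(2) by blast
      next
        assume "\<iota> = - \<iota>0" then show ?thesis using i(2) by (intro exI[of _ a] exI[of _ "-b"]) simp
      qed
    qed
  qed
  then show ?thesis using i0 by blast
qed

lemma compact_cball_field:
  fixes M :: real
  shows "compact (cball (0::'k::real_normed_field) M)"
proof (cases "M \<ge> 0")
  case False
  then have "cball (0::'k) M = {}" by auto
  then show ?thesis by simp
next
  case M: True
  from field_structure show ?thesis
  proof
    assume all: "\<forall>\<xi>::'k. \<exists>a. \<xi> = of_real a"
    have sub: "cball (0::'k) M \<subseteq> of_real ` {-M..M}"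
    proof
      fix \<xi> :: 'k assume "\<xi> \<in> cball 0 M"
      moreover obtain a where "\<xi> = of_real a" using all by blast
      ultimately have "\<bar>a\<bar> \<le> M" "\<xi> = of_real a" by auto
      then show "\<xi> \<in> of_real ` {-M..M}" by (intro image_eqI[of _ _ a]) auto
    qed
    have "compact ((of_real :: real \<Rightarrow> 'k) ` {-M..M})"
      by (intro compact_continuous_image continuous_on_of_real_id compact_Icc)
    then have "compact (of_real ` {-M..M} \<inter> cball (0::'k) M)"
      by (rule compact_Int_closed) simp
    also have "of_real ` {-M..M} \<inter> cball (0::'k) M = cball 0 M" using sub by blast
    finally show ?thesis .
  next
    assume "\<exists>\<iota>::'k. \<iota>\<^sup>2 = -1 \<and> (\<forall>\<xi>. \<exists>a b. \<xi> = of_real a + of_real b * \<iota>)"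
    then obtain \<iota> :: 'k where i2: "\<iota>\<^sup>2 = -1" and all: "\<And>\<xi>. \<exists>a b. \<xi> = of_real a + of_real b * \<iota>" by blast
    define \<phi> where "\<phi> = (\<lambda>p::real \<times> real. of_real (fst p) + of_real (snd p) * \<iota>)"
    have ni: "norm \<iota> = 1"
    proof -
      have "(norm \<iota>)\<^sup>2 = 1" using i2 by (metis norm_minus_cancel norm_one norm_power)
      then show ?thesis using norm_ge_zero[of \<iota>] by (auto simp: power2_eq_1_iff)
    qed
    have lower: "\<bar>a\<bar> + \<bar>b\<bar> \<le> 2 * norm (\<phi> (a, b))" for a b
    proof -
      have prod: "\<phi> (a, b) * (of_real a - of_real b * \<iota>) = of_real (a\<^sup>2 + b\<^sup>2)"
      proof -
        have "\<phi> (a, b) * (of_real a - of_real b * \<iota>) = of_real a * of_real a - of_real b * of_real b * (\<iota> * \<iota>)"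
          unfolding \<phi>_def by (simp add: algebra_simps)
        also have "\<iota> * \<iota> = -1" using i2 by (simp add: power2_eq_square)
        finally show ?thesis by (simp add: power2_eq_square)
      qed
      have n2: "norm (of_real a - of_real b * \<iota> :: 'k) \<le> \<bar>a\<bar> + \<bar>b\<bar>"
        using norm_triangle_ineq4[of "of_real a :: 'k" "of_real b * \<iota>"] ni by (simp add: norm_mult)
      have "a\<^sup>2 + b\<^sup>2 = norm (\<phi> (a, b)) * norm (of_real a - of_real b * \<iota> :: 'k)"
      proof -
        have "norm (of_real (a\<^sup>2 + b\<^sup>2) :: 'k) = a\<^sup>2 + b\<^sup>2" unfolding norm_of_real by simp
        then show ?thesis using arg_cong[OF prod, of norm] unfolding norm_mult by simp
      qed
      also have "\<dots> \<le> norm (\<phi> (a, b)) * (\<bar>a\<bar> + \<bar>b\<bar>)" by (intro mult_left_mono n2) simp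
      finally have A: "a\<^sup>2 + b\<^sup>2 \<le> norm (\<phi> (a, b)) * (\<bar>a\<bar> + \<bar>b\<bar>)" .
      have B: "(\<bar>a\<bar> + \<bar>b\<bar>)\<^sup>2 \<le> 2 * (a\<^sup>2 + b\<^sup>2)"
      proof -
        have "0 \<le> (\<bar>a\<bar> - \<bar>b\<bar>)\<^sup>2" by simp
        then show ?thesis by (simp add: power2_eq_square algebra_simps)
      qed
      show ?thesis
      proof (cases "\<bar>a\<bar> + \<bar>b\<bar> = 0")
        case True then show ?thesis using norm_ge_zero[of "\<phi> (a, b)"] by linarith
      next
        case False
        then have pos: "\<bar>a\<bar> + \<bar>b\<bar> > 0" by simp
        have "(\<bar>a\<bar> + \<bar>b\<bar>) * (\<bar>a\<bar> + \<bar>b\<bar>) \<le> (2 * norm (\<phi> (a, b))) * (\<bar>a\<bar> + \<bar>b\<bar>)"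
          using A B by (simp add: power2_eq_square)
        then show ?thesis using pos by simp
      qed
    qed
    define K where "K = {-2*M..2*M} \<times> {-2*M..2*M}"
    have sub: "cball (0::'k) M \<subseteq> \<phi> ` K"
    proof
      fix \<xi> :: 'k assume x: "\<xi> \<in> cball 0 M"
      obtain a b where ab: "\<xi> = of_real a + of_real b * \<iota>" using all by blast
      then have "\<xi> = \<phi> (a, b)" unfolding \<phi>_def by simp
      moreover have "\<bar>a\<bar> + \<bar>b\<bar> \<le> 2 * M" using lower[of a b] x \<open>\<xi> = \<phi> (a, b)\<close> by simp
      then have "(a, b) \<in> K" unfolding K_def by auto
      ultimately show "\<xi> \<in> \<phi> ` K" by blast
    qed
    have "compact (\<phi> ` K)"
      unfolding \<phi>_def K_def by (intro compact_continuous_image continuous_intros compact_Times compact_Icc)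
    then have "compact (\<phi> ` K \<inter> cball (0::'k) M)"
      by (rule compact_Int_closed) simp
    also have "\<phi> ` K \<inter> cball (0::'k) M = cball 0 M" using sub by blast
    finally show ?thesis .
  qed
qed


lemma compact_fun_ball:
  "compact {x::nat \<Rightarrow> 'k::real_normed_field. \<forall>j. norm (x j) \<le> M}"
proof -
  have eq: "{x::nat \<Rightarrow> 'k. \<forall>j. norm (x j) \<le> M} = PiE UNIV (\<lambda>_. cball 0 M)"
    by (auto simp: PiE_def Pi_def)
  have "compactin (product_topology (\<lambda>_. euclidean) UNIV) (PiE UNIV (\<lambda>_::nat. cball (0::'k) M))"
    by (subst compactin_PiE) (simp add: compact_cball_field)
  then show ?thesis unfolding eq euclidean_product_topology by simp
qed

lemma k_Cauchy_conv:
  fixes X :: "nat \<Rightarrow> 'k::real_normed_field"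
  assumes "Cauchy X"
  shows "convergent X"
proof -
  obtain b where b: "\<forall>x\<in>range X. norm x \<le> b"
    using cauchy_imp_bounded[OF assms] bounded_iff by blast
  then have Xb: "\<forall>n. X n \<in> cball 0 b" by auto
  have "complete (cball (0::'k) b)" by (rule compact_imp_complete[OF compact_cball_field])
  then obtain l where "X \<longlonglongrightarrow> l" unfolding complete_def using Xb assms by blast
  then show ?thesis unfolding convergent_def by blast
qed

lemma k_summable_norm_cancel:
  fixes f :: "nat \<Rightarrow> 'k::real_normed_field"
  assumes "summable (\<lambda>n. norm (f n))"
  shows "summable f"
proof -
  have C: "\<exists>N. \<forall>m\<ge>N. \<forall>n. norm (sum f {m..<n}) < e" if e: "e > 0" for e
  proof -
    obtain N where N: "\<forall>m\<ge>N. \<forall>n. norm (sum (\<lambda>n. norm (f n)) {m..<n}) < e"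
      using assms e unfolding summable_Cauchy by blast
    have "norm (sum f {m..<n}) < e" if "m \<ge> N" for m n
    proof -
      have "norm (sum f {m..<n}) \<le> sum (\<lambda>n. norm (f n)) {m..<n}" by (rule norm_sum)
      also have "\<dots> \<le> norm (sum (\<lambda>n. norm (f n)) {m..<n})" by simp
      also have "\<dots> < e" using N that by blast
      finally show ?thesis .
    qed
    then show ?thesis by blast
  qed
  have split: "sum f {..<n} = sum f {..<m} + sum f {m..<n}" if "m \<le> n" for m n
    using that by (metis atLeast0LessThan sum.atLeastLessThan_concat zero_le)
  have "Cauchy (\<lambda>n. sum f {..<n})"
  proof (rule CauchyI)
    fix e :: real assume "e > 0"
    then obtain N where N: "\<forall>m\<ge>N. \<forall>n. norm (sum f {m..<n}) < e" using C by blast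
    show "\<exists>M. \<forall>m\<ge>M. \<forall>n\<ge>M. norm (sum f {..<m} - sum f {..<n}) < e"
    proof (intro exI allI impI)
      fix m n assume mn: "m \<ge> N" "n \<ge> N"
      show "norm (sum f {..<m} - sum f {..<n}) < e"
      proof (cases "m \<le> n")
        case True
        then have "sum f {..<m} - sum f {..<n} = - sum f {m..<n}" using split by simp
        then show ?thesis using N mn by simp
      next
        case False
        then have "sum f {..<m} - sum f {..<n} = sum f {n..<m}" using split[of n m] by simp
        then show ?thesis using N mn by simp
      qed
    qed
  qed
  then show ?thesis unfolding summable_iff_convergent by (rule k_Cauchy_conv)
qed

lemma k_summable_norm:
  fixes f :: "nat \<Rightarrow> 'k::real_normed_field"
  assumes s: "summable (\<lambda>n. norm (f n))"
  shows "norm (suminf f) \<le> (\<Sum>n. norm (f n))"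
proof -
  have sf: "summable f" by (rule k_summable_norm_cancel[OF s])
  have 1: "(\<lambda>n. norm (\<Sum>i<n. f i)) \<longlonglongrightarrow> norm (suminf f)"
    by (intro tendsto_norm summable_LIMSEQ sf)
  have 2: "(\<lambda>n. \<Sum>i<n. norm (f i)) \<longlonglongrightarrow> (\<Sum>n. norm (f n))"
    by (rule summable_LIMSEQ[OF s])
  show ?thesis by (rule LIMSEQ_le[OF 1 2]) (auto intro: norm_sum)
qed

lemma pairing_cont:
  fixes a :: "nat \<Rightarrow> 'k::real_normed_field" and B :: "(nat \<Rightarrow> 'k) set"
  assumes H1: "\<And>x. x \<in> B \<Longrightarrow> summable (\<lambda>j. norm (a j) * norm (x j) ^ d)"
    and H2: "\<And>e. e > 0 \<Longrightarrow> \<exists>N. \<forall>x\<in>B. (\<Sum>j. norm (a (j+N)) * norm (x (j+N)) ^ d) < e"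
  shows "continuous_on B (\<lambda>x. pairing a x d)"
  unfolding continuous_on_def
proof (intro ballI tendstoI)
  fix x e assume x: "x \<in> B" and e: "(e::real) > 0"
  obtain N where N: "\<And>y. y \<in> B \<Longrightarrow> (\<Sum>j. norm (a (j+N)) * norm (y (j+N)) ^ d) < e / 4"
    using H2[of "e/4"] e by auto
  define g where "g = (\<lambda>y::nat \<Rightarrow> 'k. \<Sum>j<N. norm (a j) * norm (y j ^ d - x j ^ d))"
  have cg: "continuous_on UNIV g" unfolding g_def
    by (intro continuous_intros continuous_on_compose2[OF continuous_on_product_coordinates]) auto
  have opn: "open {y. g y < e / 2}" by (rule open_Collect_less[OF cg continuous_on_const])
  have gx: "g x = 0" unfolding g_def by simp
  have main: "dist (pairing a y d) (pairing a x d) < e" if y: "y \<in> B" and gy: "g y < e / 2" for y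
  proof -
    have sy: "summable (\<lambda>j. a j * y j ^ d)"
      by (rule k_summable_norm_cancel) (use H1[OF y] in \<open>simp add: norm_mult norm_power\<close>)
    have sx: "summable (\<lambda>j. a j * x j ^ d)"
      by (rule k_summable_norm_cancel) (use H1[OF x] in \<open>simp add: norm_mult norm_power\<close>)
    define h where "h = (\<lambda>j. norm (a j) * norm (y j ^ d - x j ^ d))"
    define u where "u = (\<lambda>j. norm (a j) * norm (y j) ^ d + norm (a j) * norm (x j) ^ d)"
    have hu: "h j \<le> u j" for j
    proof -
      have "norm (y j ^ d - x j ^ d) \<le> norm (y j) ^ d + norm (x j) ^ d"
        using norm_triangle_ineq4[of "y j ^ d" "x j ^ d"] by (simp add: norm_power)
      then show ?thesis unfolding h_def u_def by (simp add: mult_left_mono distrib_left[symmetric])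
    qed
    have su: "summable u" unfolding u_def by (intro summable_add H1 x y)
    have h0: "h j \<ge> 0" for j unfolding h_def by simp
    have sh: "summable h" by (rule summable_comparison_test[OF _ su]) (use hu h0 in auto)
    have "pairing a y d - pairing a x d = (\<Sum>j. a j * y j ^ d - a j * x j ^ d)"
      unfolding pairing_def by (rule suminf_diff[OF sy sx])
    also have "\<dots> = (\<Sum>j. a j * (y j ^ d - x j ^ d))" by (simp add: algebra_simps)
    finally have eq: "pairing a y d - pairing a x d = (\<Sum>j. a j * (y j ^ d - x j ^ d))" .
    have nh: "(\<lambda>j. norm (a j * (y j ^ d - x j ^ d))) = h" unfolding h_def by (simp add: norm_mult)
    have "norm (pairing a y d - pairing a x d) \<le> suminf h"
      unfolding eq using k_summable_norm[of "\<lambda>j. a j * (y j ^ d - x j ^ d)"] sh nh by simp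
    also have "suminf h = (\<Sum>j. h (j + N)) + (\<Sum>j<N. h j)"
      by (rule suminf_split_initial_segment[OF sh])
    also have "(\<Sum>j<N. h j) = g y" unfolding g_def h_def ..
    also have "(\<Sum>j. h (j + N)) \<le> (\<Sum>j. u (j + N))"
      by (intro suminf_le) (use hu sh su in \<open>auto simp: summable_iff_shift\<close>)
    also have "(\<Sum>j. u (j + N)) = (\<Sum>j. norm (a (j+N)) * norm (y (j+N)) ^ d) + (\<Sum>j. norm (a (j+N)) * norm (x (j+N)) ^ d)"
      unfolding u_def
      by (rule suminf_add[symmetric]) (use summable_ignore_initial_segment[OF H1[OF y], of N] summable_ignore_initial_segment[OF H1[OF x], of N] in auto)
    finally have "norm (pairing a y d - pairing a x d) \<le> (\<Sum>j. norm (a (j+N)) * norm (y (j+N)) ^ d) + (\<Sum>j. norm (a (j+N)) * norm (x (j+N)) ^ d) + g y"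
      by simp
    then show ?thesis using N[OF y] N[OF x] gy by (simp add: dist_norm)
  qed
  have "eventually (\<lambda>y. y \<in> {y. g y < e / 2}) (nhds x)"
    by (rule eventually_nhds_in_open[OF opn]) (use gx e in simp)
  then have "eventually (\<lambda>y. y \<noteq> x \<longrightarrow> y \<in> B \<longrightarrow> dist (pairing a y d) (pairing a x d) < e) (nhds x)"
    by eventually_elim (use main in auto)
  then show "eventually (\<lambda>y. dist (pairing a y d) (pairing a x d) < e) (at x within B)"
    unfolding eventually_at_filter .
qed

lemma prod_list_cont:
  assumes "\<And>d. d \<in> set ds \<Longrightarrow> continuous_on B (g d)"
  shows "continuous_on B (\<lambda>x. prod_list (map (\<lambda>d. g d x) ds) :: 'k::real_normed_field)"
  using assms by (induction ds) (auto intro!: continuous_intros)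

lemma mult_poly_cont:
  fixes a :: "nat \<Rightarrow> nat \<Rightarrow> 'k::real_normed_field"
  assumes "\<And>d. d \<in> {1..D} \<Longrightarrow> continuous_on B (\<lambda>x. pairing (a d) x d)"
  shows "continuous_on B (\<lambda>x. mult_poly D a x)"
  unfolding mult_poly_def
proof (intro continuous_on_sum prod_list_cont)
  fix k ds d assume ds: "ds \<in> Dtuples D k" and d: "d \<in> set ds"
  have "1 \<le> d" using ds d unfolding Dtuples_def by auto
  moreover have "d \<le> sum_list ds" using d by (rule member_le_sum_list) simp
  ultimately have "d \<in> {1..D}" using ds unfolding Dtuples_def by auto
  then show "continuous_on B (\<lambda>x. pairing (a d) x d)" by (rule assms)
qed


lemma powr_le_cancel_pos:
  fixes a b r :: real
  assumes "0 < r" "0 \<le> a" "0 \<le> b" "a powr r \<le> b powr r"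
  shows "a \<le> b"
proof (rule ccontr)
  assume "\<not> a \<le> b"
  then have "b powr r < a powr r" using assms by (intro powr_less_mono2) auto
  then show False using assms by simp
qed

lemma young_lam:
  fixes c z lam r :: real and d :: nat
  assumes c: "c \<ge> 0" and z: "z \<ge> 0" and lam: "lam > 0" and d: "d \<ge> 1" and r: "r > real d"
  shows "c * z ^ d \<le> lam powr (r / (r - real d)) * c powr (r / (r - real d)) + z powr r / lam powr (r / real d)"
proof -
  define p where "p = r / (r - real d)"
  define t where "t = r / real d"
  have d0: "real d > 0" using d by simp
  have p1: "p > 1" unfolding p_def using r d0 by simp
  have t1: "t > 1" unfolding t_def using r d0 by simp
  have pt: "1 / p + 1 / t = 1" unfolding p_def t_def using r d0 by (simp add: field_simps)
  have u0: "lam * c \<ge> 0" using lam c by simp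
  have v0: "z ^ d / lam \<ge> 0" using lam z by simp
  have "(lam * c) * (z ^ d / lam) \<le> (lam * c) powr p / p + (z ^ d / lam) powr t / t"
    by (rule Youngs_inequality[OF p1 t1 pt u0 v0])
  also have "(lam * c) powr p / p \<le> (lam * c) powr p"
    using mult_left_mono[of 1 p "(lam * c) powr p"] p1 by (simp add: divide_le_eq)
  also have "(z ^ d / lam) powr t / t \<le> (z ^ d / lam) powr t"
    using mult_left_mono[of 1 t "(z ^ d / lam) powr t"] t1 by (simp add: divide_le_eq)
  also have "(lam * c) powr p = lam powr p * c powr p" using lam c by (simp add: powr_mult)
  also have "(z ^ d / lam) powr t = (z ^ d) powr t / lam powr t" using lam z by (simp add: powr_divide)
  also have "(z ^ d) powr t = z powr r"
  proof (cases "z = 0")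
    case True then show ?thesis using d t1 by simp
  next
    case False
    then have "z > 0" using z by simp
    then have "(z ^ d) powr t = (z powr real d) powr t" by (simp add: powr_realpow)
    also have "\<dots> = z powr (real d * t)" by (simp add: powr_powr)
    also have "real d * t = r" unfolding t_def using d0 by simp
    finally show ?thesis .
  qed
  also have "(lam * c) * (z ^ d / lam) = c * z ^ d" using lam by simp
  finally show ?thesis unfolding p_def t_def by simp
qed

theorem theorem3:
  fixes I :: "'i set"
    and a :: "'i \<Rightarrow> nat \<Rightarrow> nat \<Rightarrow> 'k::real_normed_field"
    and b :: "'i \<Rightarrow> 'k"
    and D :: nat and q :: ereal and M :: real
  assumes D_pos: "1 \<le> D"
    and Dq: "ereal (real D) < q"
    and I_inf: "infinite I"
    and a_lp: "\<And>i d. i \<in> I \<Longrightarrow> d \<in> {1..D} \<Longrightarrow> in_lp (dual_exp q d) (a i d)"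
    and M_pos: "M > 0"
    and fin_sol: "\<And>S. finite S \<Longrightarrow> S \<subseteq> I \<Longrightarrow>
        \<exists>x. in_lp q x \<and> lp_norm q x \<le> M \<and> (\<forall>i\<in>S. mult_poly D (a i) x = b i)"
  shows "\<exists>x. in_lp q x \<and> lp_norm q x \<le> M \<and> (\<forall>i\<in>I. mult_poly D (a i) x = b i)"
proof -
  define B where "B = {x::nat \<Rightarrow> 'k. in_lp q x \<and> lp_norm q x \<le> M}"
  have facts: "(\<forall>x\<in>B. \<forall>j. norm (x j) \<le> M) \<and> closed B \<and>
      (\<forall>i\<in>I. \<forall>d\<in>{1..D}. continuous_on B (\<lambda>x. pairing (a i d) x d))"
  proof (cases "q = \<infinity>")
    case True
    have Beq: "B = {x. \<forall>j. norm (x j) \<le> M}"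
    proof (intro set_eqI iffI)
      fix x :: "nat \<Rightarrow> 'k" assume "x \<in> B"
      then have bdd: "bdd_above (range (\<lambda>j. norm (x j)))" and le: "(SUP j. norm (x j)) \<le> M"
        unfolding B_def in_lp_def lp_norm_def using True by auto
      show "x \<in> {x. \<forall>j. norm (x j) \<le> M}"
        using cSUP_upper[OF UNIV_I bdd] le by (auto intro: order_trans)
    next
      fix x :: "nat \<Rightarrow> 'k" assume x: "x \<in> {x. \<forall>j. norm (x j) \<le> M}"
      then have bdd: "bdd_above (range (\<lambda>j. norm (x j)))" by (auto intro: bdd_aboveI2)
      have "(SUP j. norm (x j)) \<le> M" using x by (intro cSUP_least) auto
      then show "x \<in> B" unfolding B_def in_lp_def lp_norm_def using True bdd by auto
    qed
    have cl: "closed B" unfolding Beq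
      by (intro closed_Collect_all closed_Collect_le continuous_on_const
          continuous_on_norm[OF continuous_on_product_coordinates])
    have pc: "continuous_on B (\<lambda>x. pairing (a i d) x d)" if i: "i \<in> I" and d: "d \<in> {1..D}" for i d
    proof -
      define c where "c = (\<lambda>j. norm (a i d j))"
      have "dual_exp q d = 1" unfolding dual_exp_def using True by simp
      then have sc: "summable c" using a_lp[OF i d] unfolding in_lp_def c_def by (simp add: powr_one)
      show ?thesis
      proof (rule pairing_cont)
        fix x assume x: "x \<in> B"
        show "summable (\<lambda>j. norm (a i d j) * norm (x j) ^ d)"
        proof (rule summable_comparison_test'[OF summable_mult2[OF sc, of "M ^ d"]])
          fix n
          have "norm (x n) ^ d \<le> M ^ d" using x Beq by (auto intro: power_mono)
          then show "norm (norm (a i d n) * norm (x n) ^ d) \<le> c n * M ^ d"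
            unfolding c_def by (simp add: mult_left_mono)
        qed
      next
        fix e :: real assume e: "e > 0"
        have Md: "M ^ d \<ge> 0" using M_pos by simp
        obtain N where N: "\<forall>n\<ge>N. norm (\<Sum>j. c (j + n)) < e / (M ^ d + 1)"
          using suminf_exist_split[OF _ sc, of "e / (M ^ d + 1)"] e Md by auto
        have tail0: "(\<Sum>j. c (j + N)) \<ge> 0"
          by (intro suminf_nonneg summable_ignore_initial_segment[OF sc]) (simp add: c_def)
        have tail: "(\<Sum>j. c (j + N)) < e / (M ^ d + 1)" using N tail0 by auto
        show "\<exists>N. \<forall>x\<in>B. (\<Sum>j. norm (a i d (j + N)) * norm (x (j + N)) ^ d) < e"
        proof (intro exI ballI)
          fix x assume x: "x \<in> B"
          have scN: "summable (\<lambda>j. c (j + N))" using summable_ignore_initial_segment[OF sc] by simp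
          have "(\<Sum>j. norm (a i d (j + N)) * norm (x (j + N)) ^ d) \<le> (\<Sum>j. c (j + N) * M ^ d)"
          proof (rule suminf_le)
            fix n
            have "norm (x (n + N)) ^ d \<le> M ^ d" using x Beq by (auto intro: power_mono)
            then show "norm (a i d (n + N)) * norm (x (n + N)) ^ d \<le> c (n + N) * M ^ d"
              unfolding c_def by (simp add: mult_left_mono)
          next
            show "summable (\<lambda>j. c (j + N) * M ^ d)" by (rule summable_mult2[OF scN])
            show "summable (\<lambda>j. norm (a i d (j + N)) * norm (x (j + N)) ^ d)"
            proof (rule summable_comparison_test'[OF summable_mult2[OF scN, of "M ^ d"]])
              fix n
              have "norm (x (n + N)) ^ d \<le> M ^ d" using x Beq by (auto intro: power_mono)
              then show "norm (norm (a i d (n + N)) * norm (x (n + N)) ^ d) \<le> c (n + N) * M ^ d"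
                unfolding c_def by (simp add: mult_left_mono)
            qed
          qed
          also have "\<dots> = (\<Sum>j. c (j + N)) * M ^ d" by (rule suminf_mult2[OF scN, symmetric])
          also have "\<dots> \<le> e / (M ^ d + 1) * M ^ d" using tail Md by (intro mult_right_mono) auto
          also have "\<dots> < e" using e Md by (simp add: field_simps)
          finally show "(\<Sum>j. norm (a i d (j + N)) * norm (x (j + N)) ^ d) < e" .
        qed
      qed
    qed
    show ?thesis using Beq cl pc by auto
  next
    case False
    obtain r where qr: "q = ereal r"
      using False Dq by (cases q) auto
    have rD: "r > real D" using Dq qr by simp
    have r0: "r > 0" using rD D_pos by simp
    have inlp: "in_lp q x \<longleftrightarrow> summable (\<lambda>j. norm (x j) powr r)" for x :: "nat \<Rightarrow> 'k"
      unfolding in_lp_def qr by simp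
    have lpn: "lp_norm q x = (\<Sum>j. norm (x j) powr r) powr (1 / r)" for x :: "nat \<Rightarrow> 'k"
      unfolding lp_norm_def qr by simp
    have Mr: "M powr r > 0" using M_pos by simp
    have Beq: "B = {x. \<forall>N. (\<Sum>j<N. norm (x j) powr r) \<le> M powr r}"
    proof (intro set_eqI iffI)
      fix x :: "nat \<Rightarrow> 'k" assume "x \<in> B"
      then have s: "summable (\<lambda>j. norm (x j) powr r)" and le: "(\<Sum>j. norm (x j) powr r) powr (1 / r) \<le> M"
        unfolding B_def inlp lpn by auto
      have S0: "(\<Sum>j. norm (x j) powr r) \<ge> 0" by (intro suminf_nonneg s) simp
      have "(\<Sum>j. norm (x j) powr r) = ((\<Sum>j. norm (x j) powr r) powr (1 / r)) powr r"
        using S0 r0 by (simp add: powr_powr)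
      also have "\<dots> \<le> M powr r" using le r0 S0 by (intro powr_mono2) auto
      finally have "(\<Sum>j. norm (x j) powr r) \<le> M powr r" .
      then show "x \<in> {x. \<forall>N. (\<Sum>j<N. norm (x j) powr r) \<le> M powr r}"
        using sum_le_suminf[OF s] by (auto intro: order_trans)
    next
      fix x :: "nat \<Rightarrow> 'k" assume "x \<in> {x. \<forall>N. (\<Sum>j<N. norm (x j) powr r) \<le> M powr r}"
      then have part: "\<And>N. (\<Sum>j<N. norm (x j) powr r) \<le> M powr r" by auto
      have s: "summable (\<lambda>j. norm (x j) powr r)" by (rule summableI_nonneg_bounded[OF _ part]) simp
      have le: "(\<Sum>j. norm (x j) powr r) \<le> M powr r" by (rule suminf_le_const[OF s part])
      have S0: "(\<Sum>j. norm (x j) powr r) \<ge> 0" by (intro suminf_nonneg s) simp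
      have "(\<Sum>j. norm (x j) powr r) powr (1 / r) \<le> (M powr r) powr (1 / r)"
        using le S0 r0 by (intro powr_mono2) auto
      also have "\<dots> = M" using M_pos r0 by (simp add: powr_powr)
      finally show "x \<in> B" unfolding B_def inlp lpn using s by simp
    qed
    have Bsum: "x \<in> B \<Longrightarrow> summable (\<lambda>j. norm (x j) powr r) \<and> (\<Sum>j. norm (x j) powr r) \<le> M powr r" for x
    proof -
      assume x: "x \<in> B"
      then have part: "\<And>N. (\<Sum>j<N. norm (x j) powr r) \<le> M powr r" using Beq by auto
      have s: "summable (\<lambda>j. norm (x j) powr r)" by (rule summableI_nonneg_bounded[OF _ part]) simp
      then show ?thesis using suminf_le_const[OF s part] by simp
    qed
    have bnd: "\<forall>x\<in>B. \<forall>j. norm (x j) \<le> M"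
    proof (intro ballI allI)
      fix x j assume x: "x \<in> B"
      have "norm (x j) powr r = (\<Sum>k\<in>{j}. norm (x k) powr r)" by simp
      also have "\<dots> \<le> (\<Sum>k<Suc j. norm (x k) powr r)" by (intro sum_mono2) auto
      also have "\<dots> \<le> M powr r"
      proof -
        have "\<forall>N. (\<Sum>j<N. norm (x j) powr r) \<le> M powr r" using x Beq by auto
        then show ?thesis by blast
      qed
      finally have le: "norm (x j) powr r \<le> M powr r" .
      show "norm (x j) \<le> M" by (rule powr_le_cancel_pos[OF r0 norm_ge_zero _ le]) (use M_pos in simp)
    qed
    have cn: "continuous_on UNIV (\<lambda>x::nat \<Rightarrow> 'k. norm (x j) powr r)" for j
      by (rule continuous_on_powr'[OF continuous_on_norm[OF continuous_on_product_coordinates] continuous_on_const])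
        (use r0 in auto)
    have cl: "closed B" unfolding Beq
      by (intro closed_Collect_all closed_Collect_le continuous_on_sum continuous_on_const cn)
    have pc: "continuous_on B (\<lambda>x. pairing (a i d) x d)" if i: "i \<in> I" and d: "d \<in> {1..D}" for i d
    proof -
      define c where "c = (\<lambda>j. norm (a i d j))"
      define p where "p = r / (r - real d)"
      define t where "t = r / real d"
      have d1: "d \<ge> 1" and dD: "d \<le> D" using d by auto
      have rd: "r > real d" using rD dD by linarith
      have "dual_exp q d = ereal p" unfolding dual_exp_def qr p_def using rd by simp
      then have sc: "summable (\<lambda>j. c j powr p)" using a_lp[OF i d] unfolding in_lp_def c_def by simp
      have t0: "t > 0" unfolding t_def using r0 d1 by simp
      have yl: "c j * norm (x j) ^ d \<le> lam powr p * c j powr p + norm (x j) powr r / lam powr t"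
        if "lam > 0" for lam x j
        unfolding p_def t_def c_def by (rule young_lam) (use that d1 rd in auto)
      show ?thesis
      proof (rule pairing_cont)
        fix x assume x: "x \<in> B"
        show "summable (\<lambda>j. norm (a i d j) * norm (x j) ^ d)"
        proof (rule summable_comparison_test'[OF summable_add[OF sc conjunct1[OF Bsum[OF x]]]])
          fix n
          show "norm (norm (a i d n) * norm (x n) ^ d) \<le> c n powr p + norm (x n) powr r"
            using yl[of 1 n x] unfolding c_def by simp
        qed
      next
        fix e :: real assume e: "e > 0"
        define lam where "lam = (2 * M powr r / e + 1) powr (1 / t)"
        have "2 * M powr r / e \<ge> 0" using Mr e by simp
        then have pos: "2 * M powr r / e + 1 > 0" by linarith
        have lam0: "lam > 0" unfolding lam_def using pos by simp
        have lamt: "lam powr t = 2 * M powr r / e + 1" unfolding lam_def using pos t0 by (simp add: powr_powr)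
        have part2: "M powr r / lam powr t < e / 2"
        proof -
          have den: "2 * M powr r + e > 0" using Mr e by linarith
          have "M powr r / lam powr t = M powr r * e / (2 * M powr r + e)"
            unfolding lamt using e by (simp add: field_simps)
          also have "\<dots> < e / 2"
          proof (subst pos_divide_less_eq[OF den])
            show "M powr r * e < e / 2 * (2 * M powr r + e)" using e by (simp add: algebra_simps)
          qed
          finally show ?thesis .
        qed
        have lp0: "lam powr p > 0" using lam0 by simp
        obtain N where N: "\<forall>n\<ge>N. norm (\<Sum>j. c (j + n) powr p) < e / 2 / lam powr p"
          using suminf_exist_split[OF _ sc, of "e / 2 / lam powr p"] e lp0 by auto
        have scN: "summable (\<lambda>j. c (j + N) powr p)" using summable_ignore_initial_segment[OF sc] by simp
        have tail0: "(\<Sum>j. c (j + N) powr p) \<ge> 0" by (intro suminf_nonneg scN) simp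
        have tail: "lam powr p * (\<Sum>j. c (j + N) powr p) < e / 2"
          using N tail0 lp0 by (auto simp: field_simps)
        show "\<exists>N. \<forall>x\<in>B. (\<Sum>j. norm (a i d (j + N)) * norm (x (j + N)) ^ d) < e"
        proof (intro exI ballI)
          fix x assume x: "x \<in> B"
          have sx: "summable (\<lambda>j. norm (x j) powr r)" and Sx: "(\<Sum>j. norm (x j) powr r) \<le> M powr r"
            using Bsum[OF x] by auto
          have sxN: "summable (\<lambda>j. norm (x (j + N)) powr r)" using summable_ignore_initial_segment[OF sx] by simp
          have "(\<Sum>j. norm (x (j + N)) powr r) \<le> (\<Sum>j. norm (x j) powr r)"
          proof -
            have "(\<Sum>j. norm (x j) powr r) = (\<Sum>j. norm (x (j + N)) powr r) + (\<Sum>j<N. norm (x j) powr r)"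
              by (rule suminf_split_initial_segment[OF sx])
            moreover have "(\<Sum>j<N. norm (x j) powr r) \<ge> 0" by (intro sum_nonneg) simp
            ultimately show ?thesis by simp
          qed
          then have SxN: "(\<Sum>j. norm (x (j + N)) powr r) \<le> M powr r" using Sx by simp
          have s1: "summable (\<lambda>j. lam powr p * c (j + N) powr p + norm (x (j + N)) powr r / lam powr t)"
            by (intro summable_add summable_mult scN summable_divide sxN)
          have "(\<Sum>j. norm (a i d (j + N)) * norm (x (j + N)) ^ d) \<le>
              (\<Sum>j. lam powr p * c (j + N) powr p + norm (x (j + N)) powr r / lam powr t)"
          proof (rule suminf_le)
            fix n show "norm (a i d (n + N)) * norm (x (n + N)) ^ d \<le> lam powr p * c (n + N) powr p + norm (x (n + N)) powr r / lam powr t"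
              using yl[OF lam0, of "n + N" x] unfolding c_def by simp
          next
            show "summable (\<lambda>j. lam powr p * c (j + N) powr p + norm (x (j + N)) powr r / lam powr t)" by (rule s1)
            show "summable (\<lambda>j. norm (a i d (j + N)) * norm (x (j + N)) ^ d)"
            proof (rule summable_comparison_test'[OF s1])
              fix n show "norm (norm (a i d (n + N)) * norm (x (n + N)) ^ d) \<le> lam powr p * c (n + N) powr p + norm (x (n + N)) powr r / lam powr t"
                using yl[OF lam0, of "n + N" x] unfolding c_def by simp
            qed
          qed
          also have "\<dots> = lam powr p * (\<Sum>j. c (j + N) powr p) + (\<Sum>j. norm (x (j + N)) powr r) / lam powr t"
            using scN sxN by (simp add: suminf_add[symmetric] suminf_mult suminf_divide summable_mult summable_divide)
          also have "(\<Sum>j. norm (x (j + N)) powr r) / lam powr t \<le> M powr r / lam powr t"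
            using SxN lam0 by (simp add: divide_right_mono)
          finally show "(\<Sum>j. norm (a i d (j + N)) * norm (x (j + N)) ^ d) < e"
            using tail part2 by linarith
        qed
      qed
    qed
    show ?thesis using bnd cl pc by auto
  qed
  have bnd: "\<forall>x\<in>B. \<forall>j. norm (x j) \<le> M" and cl: "closed B"
    and pcont: "\<And>i d. i \<in> I \<Longrightarrow> d \<in> {1..D} \<Longrightarrow> continuous_on B (\<lambda>x. pairing (a i d) x d)"
    using facts by auto
  have Pcont: "continuous_on B (\<lambda>x. mult_poly D (a i) x)" if "i \<in> I" for i
    by (rule mult_poly_cont) (rule pcont[OF that])
  have cB: "compact B"
  proof -
    have "compact ({x::nat \<Rightarrow> 'k. \<forall>j. norm (x j) \<le> M} \<inter> B)"
      by (rule compact_Int_closed[OF compact_fun_ball cl])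
    also have "{x::nat \<Rightarrow> 'k. \<forall>j. norm (x j) \<le> M} \<inter> B = B" using bnd by auto
    finally show ?thesis .
  qed
  define y where "y = (\<lambda>S. SOME x. x \<in> B \<and> (\<forall>i\<in>S. mult_poly D (a i) x = b i))"
  have y: "y S \<in> B \<and> (\<forall>i\<in>S. mult_poly D (a i) (y S) = b i)" if "finite S" "S \<subseteq> I" for S
  proof -
    have "\<exists>x. x \<in> B \<and> (\<forall>i\<in>S. mult_poly D (a i) x = b i)"
      using fin_sol[OF that] unfolding B_def by auto
    then show ?thesis unfolding y_def by (rule someI_ex)
  qed
  define F where "F = filtermap y (finite_subsets_at_top I)"
  have Fnb: "F \<noteq> bot" unfolding F_def by (simp add: filtermap_bot_iff)
  have evB: "eventually (\<lambda>z. z \<in> B) F"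
    unfolding F_def eventually_filtermap eventually_finite_subsets_at_top
    by (intro exI[of _ "{}"]) (use y in auto)
  obtain x where xB: "x \<in> B" and xF: "inf (nhds x) F \<noteq> bot"
    using cB Fnb evB unfolding compact_filter by blast
  have sol: "mult_poly D (a i) x = b i" if i: "i \<in> I" for i
  proof (rule ccontr)
    assume ne: "mult_poly D (a i) x \<noteq> b i"
    define e where "e = dist (mult_poly D (a i) x) (b i)"
    have e0: "e > 0" unfolding e_def using ne by simp
    have "((\<lambda>z. mult_poly D (a i) z) \<longlongrightarrow> mult_poly D (a i) x) (at x within B)"
      using Pcont[OF i] xB unfolding continuous_on_def by blast
    then have "eventually (\<lambda>z. dist (mult_poly D (a i) z) (mult_poly D (a i) x) < e) (at x within B)"
      using e0 by (rule tendstoD)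
    then have ev1: "eventually (\<lambda>z. z \<noteq> x \<longrightarrow> z \<in> B \<longrightarrow> dist (mult_poly D (a i) z) (mult_poly D (a i) x) < e) (nhds x)"
      unfolding eventually_at_filter .
    have ev2: "eventually (\<lambda>z. z \<in> B \<and> mult_poly D (a i) z = b i) F"
      unfolding F_def eventually_filtermap eventually_finite_subsets_at_top
      by (intro exI[of _ "{i}"]) (use y i in auto)
    have "eventually (\<lambda>z. False) (inf (nhds x) F)"
      unfolding eventually_inf
    proof (intro exI conjI allI impI)
      show "eventually (\<lambda>z. z \<noteq> x \<longrightarrow> z \<in> B \<longrightarrow> dist (mult_poly D (a i) z) (mult_poly D (a i) x) < e) (nhds x)" by (rule ev1)
      show "eventually (\<lambda>z. z \<in> B \<and> mult_poly D (a i) z = b i) F" by (rule ev2)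
    next
      fix z assume "(z \<noteq> x \<longrightarrow> z \<in> B \<longrightarrow> dist (mult_poly D (a i) z) (mult_poly D (a i) x) < e) \<and>
          (z \<in> B \<and> mult_poly D (a i) z = b i)"
      then show False using ne unfolding e_def by (cases "z = x") (auto simp: dist_commute)
    qed
    then show False using xF by (simp add: eventually_False)
  qed
  show ?thesis using xB sol unfolding B_def by blast
qed

end
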